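(* Assume source and target traces are related via ${\sim}=\langle \overset{\circ}{\sim},\overset{\bullet}{\sim}\rangle$, i.e. $s\sim t\iff s^\circ\overset{\circ}{\sim}t^\circ \wedge s^\bullet\overset{\bullet}{\sim}t^\bullet$, where $\overset{\circ}{\sim}$ is a total and surjective map from target to source input projections and $\overset{\bullet}{\sim}$ is an arbitrary relation between source and target output projections. Assume the compilation chain satisfies $\mathit{CC}^{\sim}$, and let $\phi_S\in\mathit{uco}(2^{\mathit{Trace}_S^\circ})$ and $\rho_S\in\mathit{uco}(2^{\mathit{Trace}_S^\bullet})$. Let $\phi_T^\#=g^\circ\circ\phi_S\circ f^\circ$ with $f^\circ(\pi_T^\circ)=\{s^\circ\mid\exists t^\circ\in\pi_T^\circ.\ s^\circ\overset{\circ}{\sim}t^\circ\}$ and $g^\circ(\pi_S^\circ)=\{t^\circ\mid\forall s^\circ.\ s^\circ\overset{\circ}{\sim}t^\circ\Rightarrow s^\circ\in\pi_S^\circ\}$, and let $\rho_T^\#$ be any map on sets of target output projections such that for all $s$ and $t$, $s^\bullet\overset{\bullet}{\sim}t^\bullet$ implies $\rho_T^\#(t^\bullet)=\rho_T^\#(\tilde\tau^\bullet(\rho_S(s^\bullet)))$. If a source program $W$ satisfies $\mathit{ANI}[\phi_S,\rho_S]$, then $W{\downarrow}$ satisfies $\mathit{ANI}[\phi_T^\#,\rho_T^\#]$.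
   Context: A compilation chain consists of source (whole) programs $W$, target programs, sets $\mathit{Trace}_S,\mathit{Trace}_T$ of source and target traces, semantics relations $W\rightsquigarrow t$ at both levels, and a compiler $W\mapsto W{\downarrow}$; $\mathit{beh}(W)=\{t\mid W\rightsquigarrow t\}$, and $W$ satisfies a hyperproperty $H$ iff $\mathit{beh}(W)\in H$. $\mathit{CC}^{\sim}$ states: for every $W$ and $t$, if $W{\downarrow}\rightsquigarrow t$ then there is $s\sim t$ with $W\rightsquigarrow s$. Each trace $t$ has a disjoint input projection $t^\circ$ and output projection $t^\bullet$; $\mathit{Trace}^\circ,\mathit{Trace}^\bullet$ denote the sets of input and output projections. "Total and surjective map from target to source" means every target input projection is related to exactly one source input projection and every source input projection is related to some target one. $\tilde\tau^\bullet(\pi)=\{t^\bullet\mid\exists s^\bullet\in\pi.\ s^\bullet\overset{\bullet}{\sim}t^\bullet\}$ is the existential image of $\overset{\bullet}{\sim}$. An upper closure operator ($\mathit{uco}$) on a powerset is a monotone, idempotent, extensive map. $\mathit{ANI}[\phi,\rho]=\{\pi\mid\forall t_1,t_2\in\pi.\ \phi(t_1^\circ)=\phi(t_2^\circ)\Rightarrow\rho(t_1^\bullet)=\rho(t_2^\bullet)\}$, where $\phi(x)$ abbreviates $\phi(\{x\})$ and similarly for $\rho$. *)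

theory Defs
  imports Main
begin

definition beh :: "('w \<Rightarrow> 'tr \<Rightarrow> bool) \<Rightarrow> 'w \<Rightarrow> 'tr set" where
  "beh sem W = {t. sem W t}"

definition sat :: "('w \<Rightarrow> 'tr \<Rightarrow> bool) \<Rightarrow> 'w \<Rightarrow> 'tr set set \<Rightarrow> bool" where
  "sat sem W H \<longleftrightarrow> beh sem W \<in> H"

definition CC :: "('w \<Rightarrow> 's \<Rightarrow> bool) \<Rightarrow> ('p \<Rightarrow> 't \<Rightarrow> bool) \<Rightarrow> ('w \<Rightarrow> 'p)
                  \<Rightarrow> ('s \<Rightarrow> 't \<Rightarrow> bool) \<Rightarrow> bool" where
  "CC semS semT cmp sim \<longleftrightarrow>
     (\<forall>W t. semT (cmp W) t \<longrightarrow> (\<exists>s. sim s t \<and> semS W s))"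

definition uco_on :: "'a set \<Rightarrow> ('a set \<Rightarrow> 'a set) \<Rightarrow> bool" where
  "uco_on A f \<longleftrightarrow>
     (\<forall>X. X \<subseteq> A \<longrightarrow> f X \<subseteq> A) \<and>
     (\<forall>X Y. X \<subseteq> A \<longrightarrow> Y \<subseteq> A \<longrightarrow> X \<subseteq> Y \<longrightarrow> f X \<subseteq> f Y) \<and>
     (\<forall>X. X \<subseteq> A \<longrightarrow> f (f X) = f X) \<and>
     (\<forall>X. X \<subseteq> A \<longrightarrow> X \<subseteq> f X)"

definition ANI :: "('tr \<Rightarrow> 'i) \<Rightarrow> ('tr \<Rightarrow> 'o) \<Rightarrow> ('i set \<Rightarrow> 'i set) \<Rightarrow> ('o set \<Rightarrow> 'o set)
                   \<Rightarrow> 'tr set set" where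
  "ANI inp out \<phi> \<rho> = {\<pi>. \<forall>t1\<in>\<pi>. \<forall>t2\<in>\<pi>.
       \<phi> {inp t1} = \<phi> {inp t2} \<longrightarrow> \<rho> {out t1} = \<rho> {out t2}}"

definition f_in :: "('si \<Rightarrow> 'ti \<Rightarrow> bool) \<Rightarrow> 'ti set \<Rightarrow> 'si set" where
  "f_in rin \<pi>T = {si. \<exists>ti\<in>\<pi>T. rin si ti}"

(* g^o: universal preimage; TI is the set Trace_T^o of target input projections *)
definition g_in :: "'ti set \<Rightarrow> ('si \<Rightarrow> 'ti \<Rightarrow> bool) \<Rightarrow> 'si set \<Rightarrow> 'ti set" where
  "g_in TI rin \<pi>S = {ti. ti \<in> TI \<and> (\<forall>si. rin si ti \<longrightarrow> si \<in> \<pi>S)}"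

definition tau_out :: "('so \<Rightarrow> 'to \<Rightarrow> bool) \<Rightarrow> 'so set \<Rightarrow> 'to set" where
  "tau_out rout \<pi> = {to. \<exists>so\<in>\<pi>. rout so to}"

end

theory Submission
  imports Defs
begin

theorem theorem4p2:
  fixes semS :: "'w \<Rightarrow> 's \<Rightarrow> bool" and semT :: "'p \<Rightarrow> 't \<Rightarrow> bool"
    and cmp :: "'w \<Rightarrow> 'p"
    and inS :: "'s \<Rightarrow> 'si" and outS :: "'s \<Rightarrow> 'so"
    and inT :: "'t \<Rightarrow> 'ti" and outT :: "'t \<Rightarrow> 'to"
    and rin :: "'si \<Rightarrow> 'ti \<Rightarrow> bool" and rout :: "'so \<Rightarrow> 'to \<Rightarrow> bool"
    and \<phi>S :: "'si set \<Rightarrow> 'si set" and \<rho>S :: "'so set \<Rightarrow> 'so set"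
    and \<rho>T :: "'to set \<Rightarrow> 'to set"
    and W :: 'w
  assumes rin_dom: "\<And>si ti. rin si ti \<Longrightarrow> si \<in> range inS \<and> ti \<in> range inT"
    and rin_total: "\<forall>ti\<in>range inT. \<exists>!si. si \<in> range inS \<and> rin si ti"
    and rin_surj: "\<forall>si\<in>range inS. \<exists>ti\<in>range inT. rin si ti"
    and rout_dom: "\<And>so to. rout so to \<Longrightarrow> so \<in> range outS \<and> to \<in> range outT"
    and cc: "CC semS semT cmp (\<lambda>s t. rin (inS s) (inT t) \<and> rout (outS s) (outT t))"
    and uco_phi: "uco_on (range inS) \<phi>S"
    and uco_rho: "uco_on (range outS) \<rho>S"
    and rhoT: "\<forall>s t. rout (outS s) (outT t) \<longrightarrow>
                 \<rho>T {outT t} = \<rho>T (tau_out rout (\<rho>S {outS s}))"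
    and src: "sat semS W (ANI inS outS \<phi>S \<rho>S)"
  shows "sat semT (cmp W)
           (ANI inT outT (g_in (range inT) rin \<circ> \<phi>S \<circ> f_in rin) \<rho>T)"
proof -
  let ?g = "g_in (range inT) rin"
  have fin: "f_in rin {inT t} = {inS s}" if "rin (inS s) (inT t)" for s t
  proof -
    have "inT t \<in> range inT" by simp
    then have u: "\<exists>!si. si \<in> range inS \<and> rin si (inT t)" using rin_total by blast
    show ?thesis unfolding f_in_def
    proof (intro set_eqI iffI)
      fix x assume "x \<in> {si. \<exists>ti\<in>{inT t}. rin si ti}"
      then have "rin x (inT t)" by simp
      then show "x \<in> {inS s}" using u that rin_dom by blast
    qed (use that in simp)
  qed
  have ginj: "A = B" if "A \<subseteq> range inS" "B \<subseteq> range inS" "?g A = ?g B" for A B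
  proof -
    have sub: "X \<subseteq> Y" if "X \<subseteq> range inS" "?g X = ?g Y" for X Y
    proof
      fix si assume si: "si \<in> X"
      then have "si \<in> range inS" using that by blast
      then obtain ti where ti: "ti \<in> range inT" "rin si ti" using rin_surj by blast
      then have u: "\<exists>!si. si \<in> range inS \<and> rin si ti" using rin_total by blast
      have "\<forall>si'. rin si' ti \<longrightarrow> si' \<in> X"
      proof (intro allI impI)
        fix si' assume "rin si' ti"
        then have "si' \<in> range inS" using rin_dom by blast
        then have "si' = si" using u ti(2) \<open>si \<in> range inS\<close> \<open>rin si' ti\<close> by (metis (no_types, lifting))
        then show "si' \<in> X" using si by simp
      qed
      then have "ti \<in> ?g X" unfolding g_in_def using ti(1) by simp
      then have "ti \<in> ?g Y" using that by simp
      then show "si \<in> Y" unfolding g_in_def using ti by blast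
    qed
    show ?thesis using sub[of A B] sub[of B A] that by blast
  qed
  show ?thesis
    unfolding sat_def ANI_def
  proof (intro CollectI ballI impI)
    fix t1 t2 assume t1: "t1 \<in> beh semT (cmp W)" and t2: "t2 \<in> beh semT (cmp W)"
      and eq: "(?g \<circ> \<phi>S \<circ> f_in rin) {inT t1} = (?g \<circ> \<phi>S \<circ> f_in rin) {inT t2}"
    obtain s1 where s1: "rin (inS s1) (inT t1)" "rout (outS s1) (outT t1)" "semS W s1"
      using cc t1 unfolding CC_def beh_def by blast
    obtain s2 where s2: "rin (inS s2) (inT t2)" "rout (outS s2) (outT t2)" "semS W s2"
      using cc t2 unfolding CC_def beh_def by blast
    have "?g (\<phi>S {inS s1}) = ?g (\<phi>S {inS s2})" using eq fin[OF s1(1)] fin[OF s2(1)] by simp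
    moreover have "\<phi>S {inS s} \<subseteq> range inS" for s proof -
      have "{inS s} \<subseteq> range inS" by simp
      then show ?thesis using uco_phi unfolding uco_on_def by (elim conjE) (rule allE, assumption, erule mp)
    qed
    ultimately have "\<phi>S {inS s1} = \<phi>S {inS s2}" by (intro ginj) simp_all
    moreover have "s1 \<in> beh semS W" "s2 \<in> beh semS W" using s1 s2 by (auto simp: beh_def)
    moreover have "\<forall>a\<in>beh semS W. \<forall>b\<in>beh semS W. \<phi>S {inS a} = \<phi>S {inS b} \<longrightarrow> \<rho>S {outS a} = \<rho>S {outS b}"
      using src unfolding sat_def ANI_def mem_Collect_eq .
    ultimately have "\<rho>S {outS s1} = \<rho>S {outS s2}" by (meson bspec mp)
    then show "\<rho>T {outT t1} = \<rho>T {outT t2}" using rhoT s1(2) s2(2) by metis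
  qed
qed

end
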